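(* Let the setting of the context hold and suppose $\gamma$ is bounded. Then there exists a constant $b_1>0$ such that \[ P\Big[\max_{1\leq k\leq d_n}|\widehat{\mathcal{E}}_{(k)} - \mathcal{E}_{(k)}|> n^{-\alpha}\Big]\leq O\big( e^{-b_1 \{n^{1-2\alpha}-n^\beta\}}\big)\quad\text{for all } 0<\alpha<(1-\beta)/2, \] where $\mathcal{E}_{(1)}\le\dots\le\mathcal{E}_{(d_n)}$ and $\widehat{\mathcal{E}}_{(1)}\le\dots\le\widehat{\mathcal{E}}_{(d_n)}$ are the ordered values of $\mathcal{E}_1,\dots,\mathcal{E}_{d_n}$ and $\widehat{\mathcal{E}}_1,\dots,\widehat{\mathcal{E}}_{d_n}$.
   Context: For each $n$, let $\mathbf{F},\mathbf{G}$ be absolutely continuous distribution functions on $\mathbb{R}^{d_n}$. Training data: $\mathbf{X}_1,\dots,\mathbf{X}_{n_1}$ iid $\mathbf{F}$, $\mathbf{Y}_1,\dots,\mathbf{Y}_{n_2}$ iid $\mathbf{G}$, independent, $n=n_1+n_2$, $\min\{n_1,n_2\}\ge2$, $n_1/n\to\pi_1\in(0,1)$; $\log d_n=O(n^\beta)$ for fixed $0\le\beta<1$. $\gamma:[0,\infty)\to[0,\infty)$ is continuous, increasing, $\gamma(0)=0$, with non-constant completely monotone derivative. $\mathcal{E}_k=2E\gamma(|X_{1k}-Y_{1k}|^2)-E\gamma(|X_{1k}-X_{2k}|^2)-E\gamma(|Y_{1k}-Y_{2k}|^2)$ and $\widehat{\mathcal{E}}_k=\frac{2}{n_1n_2}\sum_{m_1,m_2}\gamma(|X_{m_1k}-Y_{m_2k}|^2)-\binom{n_1}{2}^{-1}\sum_{m_1<m_2}\gamma(|X_{m_1k}-X_{m_2k}|^2)-\binom{n_2}{2}^{-1}\sum_{m_1<m_2}\gamma(|Y_{m_1k}-Y_{m_2k}|^2)$.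 *)

theory Defs
  imports "HOL-Probability.Probability" "HOL-Library.Landau_Symbols"
begin

definition completely_monotone_on_pos :: "(real \<Rightarrow> real) \<Rightarrow> bool" where
  "completely_monotone_on_pos f \<longleftrightarrow>
     (\<forall>k::nat. \<forall>t>0. ((deriv ^^ k) f) differentiable (at t)) \<and>
     (\<forall>k::nat. \<forall>t>0. (-1) ^ k * (deriv ^^ k) f t \<ge> 0)"

text \<open>Population energy distance of the k-th coordinate (coordinates indexed from 0).\<close>
definition energy_coord ::
  "(real \<Rightarrow> real) \<Rightarrow> (nat \<Rightarrow> real) measure \<Rightarrow> (nat \<Rightarrow> real) measure \<Rightarrow> nat \<Rightarrow> real" where
  "energy_coord \<gamma> F G k =
     2 * (\<integral>x. (\<integral>y. \<gamma> (\<bar>x k - y k\<bar>^2) \<partial>G) \<partial>F)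
     - (\<integral>x. (\<integral>x'. \<gamma> (\<bar>x k - x' k\<bar>^2) \<partial>F) \<partial>F)
     - (\<integral>y. (\<integral>y'. \<gamma> (\<bar>y k - y' k\<bar>^2) \<partial>G) \<partial>G)"

definition energy_hat_coord ::
  "(real \<Rightarrow> real) \<Rightarrow> nat \<Rightarrow> nat \<Rightarrow> (nat \<Rightarrow> nat \<Rightarrow> real) \<Rightarrow> (nat \<Rightarrow> nat \<Rightarrow> real) \<Rightarrow> nat \<Rightarrow> real" where
  "energy_hat_coord \<gamma> n1 n2 X Y k =
     2 / (real n1 * real n2) * (\<Sum>i<n1. \<Sum>j<n2. \<gamma> (\<bar>X i k - Y j k\<bar>^2))
     - (\<Sum>i<n1. \<Sum>j\<in>{i<..<n1}. \<gamma> (\<bar>X i k - X j k\<bar>^2)) / real (n1 choose 2)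
     - (\<Sum>i<n2. \<Sum>j\<in>{i<..<n2}. \<gamma> (\<bar>Y i k - Y j k\<bar>^2)) / real (n2 choose 2)"

text \<open>Order statistic: ordstat f d k is the (k+1)-th smallest among f 0, ..., f (d-1).\<close>
definition ordstat :: "(nat \<Rightarrow> real) \<Rightarrow> nat \<Rightarrow> nat \<Rightarrow> real" where
  "ordstat f d k = sort (map f [0..<d]) ! k"

end

theory Submission
  imports Defs "HOL-Library.Multiset"
begin

lemma coords_indep:
  assumes fin: "finite I" "I \<noteq> {}" and P: "\<And>i. i\<in>I \<Longrightarrow> prob_space (M i)"
  shows "prob_space.indep_vars (PiM I M) M (\<lambda>i x. x i) I"
proof -
  interpret prob_space "PiM I M" by (rule prob_space_PiM) (rule P)
  have "distr (PiM I M) (PiM I M) (\<lambda>x. \<lambda>i\<in>I. x i) = distr (PiM I M) (PiM I M) (\<lambda>x. x)"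
    by (rule distr_cong) (auto simp: space_PiM)
  also have "\<dots> = PiM I M" by simp
  also have "\<dots> = PiM I (\<lambda>i. distr (PiM I M) (M i) (\<lambda>x. x i))"
    by (rule PiM_cong) (auto simp: distr_PiM_component P)
  finally show ?thesis
    by (subst indep_vars_iff_distr_eq_PiM') (auto simp: fin)
qed

lemma pair_distr:
  assumes fin: "finite I" and P: "\<And>i. i\<in>I \<Longrightarrow> prob_space (M i)"
    and ab: "a \<in> I" "b \<in> I" "a \<noteq> b"
  shows "distr (PiM I M) (M a \<Otimes>\<^sub>M M b) (\<lambda>x. (x a, x b)) = M a \<Otimes>\<^sub>M M b"
proof -
  interpret prob_space "PiM I M" by (rule prob_space_PiM) (rule P)
  have ind: "indep_vars M (\<lambda>i x. x i) I" using coords_indep[of I M] fin P ab by blast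
  have iv: "indep_var (PiM {a} M) (\<lambda>\<omega>. restrict (\<lambda>i. \<omega> i) {a}) (PiM {b} M) (\<lambda>\<omega>. restrict (\<lambda>i. \<omega> i) {b})"
    by (rule indep_var_restrict[OF ind]) (use ab in auto)
  have iv2: "indep_var (M a) ((\<lambda>z. z a) \<circ> (\<lambda>\<omega>. restrict (\<lambda>i. \<omega> i) {a})) (M b) ((\<lambda>z. z b) \<circ> (\<lambda>\<omega>. restrict (\<lambda>i. \<omega> i) {b}))"
    by (rule indep_var_compose[OF iv]) auto
  have e: "((\<lambda>z. z a) \<circ> (\<lambda>\<omega>. restrict (\<lambda>i. \<omega> i) {a})) = (\<lambda>x. x a)"
          "((\<lambda>z. z b) \<circ> (\<lambda>\<omega>. restrict (\<lambda>i. \<omega> i) {b})) = (\<lambda>x. x b)"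
    by auto
  have "distr (PiM I M) (M a) (\<lambda>x. x a) \<Otimes>\<^sub>M distr (PiM I M) (M b) (\<lambda>x. x b)
        = distr (PiM I M) (M a \<Otimes>\<^sub>M M b) (\<lambda>x. (x a, x b))"
    using iv2 unfolding e indep_var_distribution_eq by auto
  then show ?thesis using ab by (simp add: distr_PiM_component P)
qed

lemma pair_mean:
  assumes fin: "finite I" and P: "\<And>i. i\<in>I \<Longrightarrow> prob_space (M i)"
    and ab: "a \<in> I" "b \<in> I" "a \<noteq> b"
    and S: "\<And>i. i\<in>I \<Longrightarrow> sets (M i) = sets D"
    and f: "(f :: _ \<Rightarrow> real) \<in> borel_measurable (D \<Otimes>\<^sub>M D)"
    and fb: "\<And>z. 0 \<le> f z \<and> f z \<le> B"
  shows "(\<integral>x. f (x a, x b) \<partial>PiM I M) = (\<integral>x. (\<integral>y. f (x,y) \<partial>M b) \<partial>M a)"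
proof -
  interpret Ma: prob_space "M a" using P ab by auto
  interpret Mb: prob_space "M b" using P ab by auto
  interpret MM: pair_prob_space "M a" "M b" by standard
  have sM: "sets (M a \<Otimes>\<^sub>M M b) = sets (D \<Otimes>\<^sub>M D)"
    using S ab by (intro sets_pair_measure_cong) auto
  have fm: "f \<in> borel_measurable (M a \<Otimes>\<^sub>M M b)"
    using f measurable_cong_sets[OF sM refl] by blast
  have pm: "(\<lambda>x. (x a, x b)) \<in> measurable (PiM I M) (M a \<Otimes>\<^sub>M M b)"
    using ab by (intro measurable_Pair) auto
  have "(\<integral>x. f (x a, x b) \<partial>PiM I M) = integral\<^sup>L (distr (PiM I M) (M a \<Otimes>\<^sub>M M b) (\<lambda>x. (x a, x b))) f"
    by (rule integral_distr[symmetric, OF pm fm])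
  also have "\<dots> = integral\<^sup>L (M a \<Otimes>\<^sub>M M b) f"
  proof -
    have "distr (PiM I M) (M a \<Otimes>\<^sub>M M b) (\<lambda>x. (x a, x b)) = M a \<Otimes>\<^sub>M M b"
      by (rule pair_distr) (use fin P ab in auto)
    then show ?thesis by simp
  qed
  also have "\<dots> = (\<integral>x. (\<integral>y. f (x,y) \<partial>M b) \<partial>M a)"
  proof (rule MM.integral_fst'[symmetric])
    show "integrable (M a \<Otimes>\<^sub>M M b) f"
      by (rule MM.P.integrable_const_bound[where B=B]) (use fb fm in \<open>auto\<close>)
  qed
  finally show ?thesis .
qed

lemma core_hoeff:
  assumes fin: "finite I" and P: "\<And>i. i\<in>I \<Longrightarrow> prob_space (M i)"
    and S: "\<And>i. i\<in>I \<Longrightarrow> sets (M i) = sets D"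
    and f: "(f :: _ \<Rightarrow> real) \<in> borel_measurable (D \<Otimes>\<^sub>M D)"
    and fb: "\<And>z. 0 \<le> f z \<and> f z \<le> B" and Bpos: "B > 0"
    and L: "finite L" "L \<noteq> {}"
    and ab: "\<And>l. l\<in>L \<Longrightarrow> \<alpha> l \<in> I \<and> \<beta> l \<in> I \<and> \<alpha> l \<noteq> \<beta> l"
    and disj: "\<And>l l'. l\<in>L \<Longrightarrow> l'\<in>L \<Longrightarrow> l\<noteq>l' \<Longrightarrow> {\<alpha> l, \<beta> l} \<inter> {\<alpha> l', \<beta> l'} = {}"
    and mean: "\<And>l. l\<in>L \<Longrightarrow> (\<integral>x. f (x (\<alpha> l), x (\<beta> l)) \<partial>PiM I M) = \<theta>"
    and eps: "\<epsilon> \<ge> 0"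
  shows "measure (PiM I M) {x\<in>space (PiM I M). \<bar>(\<Sum>l\<in>L. f (x (\<alpha> l), x (\<beta> l))) - real (card L) * \<theta>\<bar> \<ge> \<epsilon>}
          \<le> 2 * exp (-2 * \<epsilon>\<^sup>2 / (real (card L) * B\<^sup>2))"
proof -
  interpret prob_space "PiM I M" by (rule prob_space_PiM) (rule P)
  have Ine: "I \<noteq> {}" using L ab by blast
  have ind0: "indep_vars M (\<lambda>i x. x i) I" using coords_indep[of I M] fin Ine P by blast
  have ind1: "indep_vars (\<lambda>l. PiM {\<alpha> l, \<beta> l} M) (\<lambda>l \<omega>. restrict (\<lambda>i. \<omega> i) {\<alpha> l, \<beta> l}) L"
    by (rule indep_vars_restrict[OF ind0]) (use ab disj in \<open>auto simp: disjoint_family_on_def\<close>)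
  have Ym: "(\<lambda>z. f (z (\<alpha> l), z (\<beta> l))) \<in> borel_measurable (PiM {\<alpha> l, \<beta> l} M)" if l: "l \<in> L" for l
  proof -
    have 1: "(\<lambda>z. z (\<alpha> l)) \<in> measurable (PiM {\<alpha> l, \<beta> l} M) D"
      using measurable_cong_sets[OF refl S[of "\<alpha> l"]] ab[OF l]
      by (metis insertI1 measurable_component_singleton)
    have 2: "(\<lambda>z. z (\<beta> l)) \<in> measurable (PiM {\<alpha> l, \<beta> l} M) D"
      using measurable_cong_sets[OF refl S[of "\<beta> l"]] ab[OF l]
      by (metis insertI1 insert_commute measurable_component_singleton)
    show ?thesis using measurable_compose[OF measurable_Pair[OF 1 2] f] by simp
  qed
  have ind2: "indep_vars (\<lambda>_. borel) (\<lambda>l x. (\<lambda>z. f (z (\<alpha> l), z (\<beta> l))) (restrict (\<lambda>i. x i) {\<alpha> l, \<beta> l})) L"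
    by (rule indep_vars_compose2[OF ind1 Ym])
  have eqX: "(\<lambda>l x. (\<lambda>z. f (z (\<alpha> l), z (\<beta> l))) (restrict (\<lambda>i. x i) {\<alpha> l, \<beta> l})) = (\<lambda>l x. f (x (\<alpha> l), x (\<beta> l)))"
    by auto
  have ind: "indep_vars (\<lambda>_. borel) (\<lambda>l x. f (x (\<alpha> l), x (\<beta> l))) L" using ind2 unfolding eqX .
  interpret B: indep_interval_bounded_random_variables "PiM I M" L "\<lambda>l x. f (x (\<alpha> l), x (\<beta> l))" "\<lambda>_. 0" "\<lambda>_. B"
    by unfold_locales (use L ind fb in auto)
  interpret H: Hoeffding_ineq "PiM I M" L "\<lambda>l x. f (x (\<alpha> l), x (\<beta> l))" "\<lambda>_. 0" "\<lambda>_. B"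
     "(\<Sum>l\<in>L. expectation (\<lambda>x. f (x (\<alpha> l), x (\<beta> l))))"
    by unfold_locales (rule reflexive)
  have "(\<Sum>l\<in>L. expectation (\<lambda>x. f (x (\<alpha> l), x (\<beta> l)))) = real (card L) * \<theta>"
    using mean by simp
  moreover have "(\<Sum>i\<in>L. (B - 0)\<^sup>2) = real (card L) * B\<^sup>2" by simp
  moreover have "(\<Sum>i\<in>L. (B - 0)\<^sup>2) > 0" using L Bpos by (simp add: card_gt_0_iff)
  ultimately show ?thesis using H.Hoeffding_ineq_abs_ge[OF eps] by simp
qed


lemma measure_le_subset:
  assumes "finite_measure M" "A \<subseteq> B" "B \<in> sets M"
  shows "measure M A \<le> measure M B"
proof (cases "A \<in> sets M")
  case True then show ?thesis using assms finite_measure.finite_measure_mono by blast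
next
  case False then show ?thesis by (simp add: measure_notin_sets)
qed

lemma pair_meas:
  assumes S: "\<And>i. i\<in>I \<Longrightarrow> sets (M i) = sets D"
    and f: "f \<in> borel_measurable (D \<Otimes>\<^sub>M D)" and ab: "a \<in> I" "b \<in> I"
  shows "(\<lambda>x. f (x a, x b)) \<in> borel_measurable (PiM I M)"
proof -
  have 1: "(\<lambda>z. z a) \<in> measurable (PiM I M) D"
    using measurable_cong_sets[OF refl S[of a]] ab by (metis measurable_component_singleton)
  have 2: "(\<lambda>z. z b) \<in> measurable (PiM I M) D"
    using measurable_cong_sets[OF refl S[of b]] ab by (metis measurable_component_singleton)
  show ?thesis using measurable_compose[OF measurable_Pair[OF 1 2] f] by simp
qed

lemma color_union:
  assumes fin: "finite I" and P: "\<And>i. i\<in>I \<Longrightarrow> prob_space (M i)"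
    and S: "\<And>i. i\<in>I \<Longrightarrow> sets (M i) = sets D"
    and f: "(f :: _ \<Rightarrow> real) \<in> borel_measurable (D \<Otimes>\<^sub>M D)"
    and fb: "\<And>z. 0 \<le> f z \<and> f z \<le> B" and Bpos: "B > 0"
    and C: "finite C"
    and L: "\<And>c. c \<in> C \<Longrightarrow> finite (L c)"
    and ab: "\<And>c l. c \<in> C \<Longrightarrow> l\<in>L c \<Longrightarrow> \<alpha> c l \<in> I \<and> \<beta> c l \<in> I \<and> \<alpha> c l \<noteq> \<beta> c l"
    and disj: "\<And>c l l'. c \<in> C \<Longrightarrow> l\<in>L c \<Longrightarrow> l'\<in>L c \<Longrightarrow> l\<noteq>l' \<Longrightarrow> {\<alpha> c l, \<beta> c l} \<inter> {\<alpha> c l', \<beta> c l'} = {}"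
    and mean: "\<And>c l. c \<in> C \<Longrightarrow> l\<in>L c \<Longrightarrow> (\<integral>x. f (x (\<alpha> c l), x (\<beta> c l)) \<partial>PiM I M) = \<theta>"
    and q: "\<And>c. c \<in> C \<Longrightarrow> L c \<noteq> {} \<Longrightarrow> q \<le> real (card (L c))"
    and N: "N = (\<Sum>c\<in>C. real (card (L c)))" "N > 0"
    and s: "s > 0"
  shows "measure (PiM I M) {x\<in>space (PiM I M).
            \<bar>(\<Sum>c\<in>C. \<Sum>l\<in>L c. f (x (\<alpha> c l), x (\<beta> c l))) / N - \<theta>\<bar> > s}
          \<le> 2 * real (card C) * exp (-2 * q * s\<^sup>2 / B\<^sup>2)"
proof -
  interpret prob_space "PiM I M" by (rule prob_space_PiM) (rule P)
  have pm: "\<And>a b. a\<in>I \<Longrightarrow> b\<in>I \<Longrightarrow> (\<lambda>x. f (x a, x b)) \<in> borel_measurable (PiM I M)"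
    by (rule pair_meas[where D=D]) (use S f in auto)
  define C' where "C' = {c\<in>C. L c \<noteq> {}}"
  have C'C: "C' \<subseteq> C" and finC': "finite C'" using C by (auto simp: C'_def)
  define H where "H c = {x\<in>space (PiM I M). \<bar>(\<Sum>l\<in>L c. f (x (\<alpha> c l), x (\<beta> c l))) - real (card (L c)) * \<theta>\<bar>
                     \<ge> real (card (L c)) * s}" for c
  have Hm: "H c \<in> sets (PiM I M)" if c: "c \<in> C" for c
  proof -
    have "(\<lambda>x. \<bar>(\<Sum>l\<in>L c. f (x (\<alpha> c l), x (\<beta> c l))) - real (card (L c)) * \<theta>\<bar>) \<in> borel_measurable (PiM I M)"
      using pm ab[OF c] by (intro borel_measurable_abs borel_measurable_diff borel_measurable_sum) auto
    then show ?thesis unfolding H_def by measurable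
  qed
  have sub: "{x\<in>space (PiM I M). \<bar>(\<Sum>c\<in>C. \<Sum>l\<in>L c. f (x (\<alpha> c l), x (\<beta> c l))) / N - \<theta>\<bar> > s}
             \<subseteq> (\<Union>c\<in>C'. H c)"
  proof
    fix x assume x: "x \<in> {x\<in>space (PiM I M). \<bar>(\<Sum>c\<in>C. \<Sum>l\<in>L c. f (x (\<alpha> c l), x (\<beta> c l))) / N - \<theta>\<bar> > s}"
    show "x \<in> (\<Union>c\<in>C'. H c)"
    proof (rule ccontr)
      assume nx: "x \<notin> (\<Union>c\<in>C'. H c)"
      define Sc where "Sc c = (\<Sum>l\<in>L c. f (x (\<alpha> c l), x (\<beta> c l))) - real (card (L c)) * \<theta>" for c
      have lt: "\<bar>Sc c\<bar> < real (card (L c)) * s" if "c \<in> C'" for c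
        using nx x that unfolding H_def Sc_def by auto
      have z: "Sc c = 0" if "c \<in> C - C'" for c using that by (auto simp: Sc_def C'_def)
      have C'ne: "C' \<noteq> {}"
      proof
        assume "C' = {}"
        then have "\<forall>c\<in>C. card (L c) = 0" by (auto simp: C'_def)
        then show False using N by simp
      qed
      have "(\<Sum>c\<in>C. \<Sum>l\<in>L c. f (x (\<alpha> c l), x (\<beta> c l))) - N * \<theta> = (\<Sum>c\<in>C. Sc c)"
        by (simp add: Sc_def N(1) sum_subtractf sum_distrib_right)
      also have "\<dots> = (\<Sum>c\<in>C'. Sc c)"
        using z C C'C by (intro sum.mono_neutral_right) auto
      finally have eq: "(\<Sum>c\<in>C. \<Sum>l\<in>L c. f (x (\<alpha> c l), x (\<beta> c l))) - N * \<theta> = (\<Sum>c\<in>C'. Sc c)" .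
      have "\<bar>\<Sum>c\<in>C'. Sc c\<bar> \<le> (\<Sum>c\<in>C'. \<bar>Sc c\<bar>)" by (rule sum_abs)
      also have "\<dots> < (\<Sum>c\<in>C'. real (card (L c)) * s)"
        using lt finC' C'ne by (intro sum_strict_mono) auto
      also have "\<dots> = (\<Sum>c\<in>C. real (card (L c))) * s"
        using C C'C by (subst sum_distrib_right) (intro sum.mono_neutral_left, auto simp: C'_def)
      finally have "\<bar>(\<Sum>c\<in>C. \<Sum>l\<in>L c. f (x (\<alpha> c l), x (\<beta> c l))) - N * \<theta>\<bar> < N * s"
        using eq N(1) by simp
      then have "\<bar>(\<Sum>c\<in>C. \<Sum>l\<in>L c. f (x (\<alpha> c l), x (\<beta> c l))) / N - \<theta>\<bar> < s"
        using N(2) by (simp add: field_simps abs_divide)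
      then show False using x by simp
    qed
  qed
  have "measure (PiM I M) {x\<in>space (PiM I M). \<bar>(\<Sum>c\<in>C. \<Sum>l\<in>L c. f (x (\<alpha> c l), x (\<beta> c l))) / N - \<theta>\<bar> > s}
        \<le> measure (PiM I M) (\<Union>c\<in>C'. H c)"
    using sub Hm C'C finC' by (intro measure_le_subset) (auto intro: finite_measure_axioms)
  also have "\<dots> \<le> (\<Sum>c\<in>C'. measure (PiM I M) (H c))"
    using Hm C'C finC' by (intro finite_measure_subadditive_finite) auto
  also have "\<dots> \<le> (\<Sum>c\<in>C'. 2 * exp (-2 * q * s\<^sup>2 / B\<^sup>2))"
  proof (rule sum_mono)
    fix c assume c: "c \<in> C'"
    then have cC: "c \<in> C" and Lne: "L c \<noteq> {}" by (auto simp: C'_def)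
    have cardpos: "real (card (L c)) > 0" using L[OF cC] Lne by (simp add: card_gt_0_iff)
    have "measure (PiM I M) (H c) \<le> 2 * exp (-2 * (real (card (L c)) * s)\<^sup>2 / (real (card (L c)) * B\<^sup>2))"
      unfolding H_def
      by (rule core_hoeff[OF fin P S f fb Bpos L[OF cC] Lne])
         (use ab[OF cC] disj[OF cC] mean[OF cC] s in auto)
    also have "-2 * (real (card (L c)) * s)\<^sup>2 / (real (card (L c)) * B\<^sup>2) = -2 * real (card (L c)) * s\<^sup>2 / B\<^sup>2"
      using cardpos by (simp add: power2_eq_square field_simps)
    also have "\<dots> \<le> -2 * q * s\<^sup>2 / B\<^sup>2"
      using q[OF cC Lne] Bpos by (simp add: divide_right_mono mult_right_mono)
    finally show "measure (PiM I M) (H c) \<le> 2 * exp (-2 * q * s\<^sup>2 / B\<^sup>2)"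
      by (smt (verit) exp_le_cancel_iff)
  qed
  also have "\<dots> = real (card C') * (2 * exp (-2 * q * s\<^sup>2 / B\<^sup>2))" by simp
  also have "\<dots> \<le> real (card C) * (2 * exp (-2 * q * s\<^sup>2 / B\<^sup>2))"
    using C C'C by (intro mult_right_mono) (auto intro: card_mono)
  finally show ?thesis by simp
qed

lemma prod_lessThan_add:
  fixes g :: "nat \<Rightarrow> 'b::comm_monoid_mult"
  shows "prod g {..<m1 + m2} = prod g {..<m1} * prod (\<lambda>j. g (m1 + j)) {..<m2}"
  by (induction m2) (auto simp: ac_simps)

lemma distr_Phi:
  fixes m1 m2 :: nat and F G :: "'a measure"
  assumes PF: "prob_space F" and PG: "prob_space G"
  defines "Mix \<equiv> (\<lambda>i. if i < m1 then F else G)"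
  defines "Phi \<equiv> (\<lambda>\<omega>. \<lambda>i\<in>{..<m1+m2}. if i < m1 then fst \<omega> i else snd \<omega> (i - m1))"
  shows "Phi \<in> measurable (PiM {..<m1} (\<lambda>_. F) \<Otimes>\<^sub>M PiM {..<m2} (\<lambda>_. G)) (PiM {..<m1+m2} Mix)"
    and "distr (PiM {..<m1} (\<lambda>_. F) \<Otimes>\<^sub>M PiM {..<m2} (\<lambda>_. G)) (PiM {..<m1+m2} Mix) Phi = PiM {..<m1+m2} Mix"
proof -
  let ?Q = "PiM {..<m1} (\<lambda>_. F) \<Otimes>\<^sub>M PiM {..<m2} (\<lambda>_. G)"
  interpret F: prob_space F by fact
  interpret G: prob_space G by fact
  interpret PF: prob_space "PiM {..<m1} (\<lambda>_. F)" by (rule prob_space_PiM) (rule PF)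
  interpret PG: prob_space "PiM {..<m2} (\<lambda>_. G)" by (rule prob_space_PiM) (rule PG)
  interpret Q: pair_prob_space "PiM {..<m1} (\<lambda>_. F)" "PiM {..<m2} (\<lambda>_. G)" by standard
  interpret PM: product_sigma_finite Mix
    unfolding product_sigma_finite_def Mix_def
    using F.sigma_finite_measure_axioms G.sigma_finite_measure_axioms by auto
  show meas: "Phi \<in> measurable ?Q (PiM {..<m1+m2} Mix)"
    unfolding Phi_def
  proof (rule measurable_restrict)
    fix i assume i: "i \<in> {..<m1+m2}"
    show "(\<lambda>\<omega>. if i < m1 then fst \<omega> i else snd \<omega> (i - m1)) \<in> measurable ?Q (Mix i)"
    proof (cases "i < m1")
      case True
      then show ?thesis unfolding Mix_def by simp
    next
      case False
      then show ?thesis unfolding Mix_def using i by simp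
    qed
  qed
  show "distr ?Q (PiM {..<m1+m2} Mix) Phi = PiM {..<m1+m2} Mix"
  proof (rule PM.PiM_eqI)
    show "sets (distr ?Q (PiM {..<m1+m2} Mix) Phi) = sets (PiM {..<m1+m2} Mix)" by simp
    fix A assume A: "\<And>i. i \<in> {..<m1+m2} \<Longrightarrow> A i \<in> sets (Mix i)"
    have AF: "A i \<in> sets F" if "i < m1" for i using A[of i] that by (auto simp: Mix_def)
    have AG: "A (m1 + j) \<in> sets G" if "j < m2" for j using A[of "m1+j"] that by (auto simp: Mix_def)
    have pre: "Phi -` PiE {..<m1+m2} A \<inter> space ?Q = PiE {..<m1} A \<times> PiE {..<m2} (\<lambda>j. A (m1 + j))"
    proof (intro equalityI subsetI)
      fix x assume x: "x \<in> Phi -` PiE {..<m1+m2} A \<inter> space ?Q"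
      obtain a b where xab: "x = (a, b)" by (cases x)
      have ab: "(a, b) \<in> space ?Q" "Phi (a, b) \<in> PiE {..<m1+m2} A" using x xab by auto
      have "a \<in> PiE {..<m1} A"
      proof
        fix i assume i: "i \<in> {..<m1}"
        have "Phi (a,b) i \<in> A i" using ab(2) i by (auto simp: PiE_def Pi_def)
        then show "a i \<in> A i" using i by (auto simp: Phi_def)
      next
        fix i assume "i \<notin> {..<m1}" then show "a i = undefined" using ab(1) by (auto simp: space_pair_measure space_PiM PiE_def extensional_def)
      qed
      moreover have "b \<in> PiE {..<m2} (\<lambda>j. A (m1 + j))"
      proof
        fix j assume j: "j \<in> {..<m2}"
        have "Phi (a,b) (m1 + j) \<in> A (m1 + j)" using ab(2) j by (auto simp: PiE_def Pi_def)
        then show "b j \<in> A (m1 + j)" using j by (auto simp: Phi_def)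
      next
        fix i assume "i \<notin> {..<m2}" then show "b i = undefined" using ab(1) by (auto simp: space_pair_measure space_PiM PiE_def extensional_def)
      qed
      ultimately show "x \<in> PiE {..<m1} A \<times> PiE {..<m2} (\<lambda>j. A (m1 + j))" using xab by simp
    next
      fix x assume x: "x \<in> PiE {..<m1} A \<times> PiE {..<m2} (\<lambda>j. A (m1 + j))"
      obtain a b where xab: "x = (a, b)" by (cases x)
      have a: "a \<in> PiE {..<m1} A" and b: "b \<in> PiE {..<m2} (\<lambda>j. A (m1 + j))" using x xab by auto
      have "Phi (a, b) \<in> PiE {..<m1+m2} A"
      proof
        fix i assume i: "i \<in> {..<m1+m2}"
        show "Phi (a, b) i \<in> A i"
        proof (cases "i < m1")
          case True then show ?thesis using a i by (auto simp: Phi_def)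
        next
          case False
          then have j: "i - m1 < m2" "m1 + (i - m1) = i" using i by auto
          have "b (i - m1) \<in> A (m1 + (i - m1))" using PiE_mem[OF b, of "i - m1"] j by simp
          moreover have "Phi (a, b) i = b (i - m1)" using i False by (simp add: Phi_def)
          ultimately show ?thesis using j by simp
        qed
      next
        fix i assume "i \<notin> {..<m1+m2}" then show "Phi (a, b) i = undefined" by (auto simp: Phi_def)
      qed
      have "PiE {..<m1} A \<subseteq> space (PiM {..<m1} (\<lambda>_. F))"
        unfolding space_PiM by (rule PiE_mono) (use AF sets.sets_into_space in blast)
      moreover have "PiE {..<m2} (\<lambda>j. A (m1 + j)) \<subseteq> space (PiM {..<m2} (\<lambda>_. G))"
        unfolding space_PiM by (rule PiE_mono) (use AG sets.sets_into_space in blast)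
      ultimately have "a \<in> space (PiM {..<m1} (\<lambda>_. F))" "b \<in> space (PiM {..<m2} (\<lambda>_. G))" using a b by auto
      then have "(a, b) \<in> space ?Q" by (simp add: space_pair_measure)
      with \<open>Phi (a, b) \<in> PiE {..<m1+m2} A\<close> show "x \<in> Phi -` PiE {..<m1+m2} A \<inter> space ?Q" using xab by simp
    qed
    have "emeasure (distr ?Q (PiM {..<m1+m2} Mix) Phi) (PiE {..<m1+m2} A)
          = emeasure ?Q (Phi -` PiE {..<m1+m2} A \<inter> space ?Q)"
      using meas A by (intro emeasure_distr) (auto intro: sets_PiM_I_finite)
    also have "\<dots> = emeasure (PiM {..<m1} (\<lambda>_. F)) (PiE {..<m1} A) * emeasure (PiM {..<m2} (\<lambda>_. G)) (PiE {..<m2} (\<lambda>j. A (m1 + j)))"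
      unfolding pre using AF AG by (intro PG.emeasure_pair_measure_Times) (auto intro: sets_PiM_I_finite)
    also have "\<dots> = (\<Prod>i\<in>{..<m1}. emeasure F (A i)) * (\<Prod>j\<in>{..<m2}. emeasure G (A (m1 + j)))"
    proof -
      interpret PFF: product_sigma_finite "\<lambda>_. F"
        unfolding product_sigma_finite_def using F.sigma_finite_measure_axioms by auto
      interpret PGG: product_sigma_finite "\<lambda>_. G"
        unfolding product_sigma_finite_def using G.sigma_finite_measure_axioms by auto
      have "emeasure (PiM {..<m1} (\<lambda>_. F)) (PiE {..<m1} A) = (\<Prod>i<m1. emeasure F (A i))"
        by (rule PFF.emeasure_PiM) (use AF in auto)
      moreover have "emeasure (PiM {..<m2} (\<lambda>_. G)) (PiE {..<m2} (\<lambda>j. A (m1 + j))) = (\<Prod>j<m2. emeasure G (A (m1 + j)))"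
        by (rule PGG.emeasure_PiM) (use AG in auto)
      ultimately show ?thesis by simp
    qed
    also have "\<dots> = (\<Prod>i\<in>{..<m1+m2}. emeasure (Mix i) (A i))"
      by (subst prod_lessThan_add) (auto simp: Mix_def intro!: arg_cong2[where f="(*)"] prod.cong)
    finally show "emeasure (distr ?Q (PiM {..<m1+m2} Mix) Phi) (PiE {..<m1+m2} A) = (\<Prod>i\<in>{..<m1+m2}. emeasure (Mix i) (A i))" .
  qed simp
qed

definition sg :: "nat \<Rightarrow> nat \<Rightarrow> nat \<Rightarrow> nat" where
  "sg m c i = (c + m - i) mod m"

definition Pc :: "nat \<Rightarrow> nat \<Rightarrow> nat set" where
  "Pc m c = {i. i < m \<and> i < sg m c i}"

lemma sg_lt: "0 < m \<Longrightarrow> sg m c i < m" by (simp add: sg_def)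

lemma sg_invol: assumes "c < m" "i < m" shows "sg m c (sg m c i) = i"
proof -
  have m: "0 < m" using assms by auto
  have "(c + m - i) mod m \<le> c + m" by (meson le_trans mod_le_divisor m le_add2)
  have "int (sg m c (sg m c i)) = (int c + int m - int ((c + m - i) mod m)) mod int m"
    unfolding sg_def using sg_lt[OF m, of c i] by (simp add: sg_def of_nat_diff zmod_int)
  also have "\<dots> = (int c + int m - ((int c + int m - int i) mod int m)) mod int m"
    using assms by (simp add: of_nat_diff zmod_int)
  also have "\<dots> = (int c + int m - (int c + int m - int i)) mod int m"
    by (simp add: mod_diff_right_eq)
  also have "\<dots> = int i" using assms by simp
  finally show ?thesis by simp
qed

lemma sg_inj: assumes "c < m" "i < m" "j < m" "sg m c i = sg m c j" shows "i = j"
  using sg_invol[OF assms(1,2)] sg_invol[OF assms(1,3)] assms(4) by metis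

lemma Pc_props:
  assumes "c < m" "i \<in> Pc m c"
  shows "i < m" "sg m c i < m" "i \<noteq> sg m c i"
  using assms by (auto simp: Pc_def sg_def)

lemma Pc_disj:
  assumes c: "c < m" and i: "i \<in> Pc m c" and j: "j \<in> Pc m c" and ne: "i \<noteq> j"
  shows "{i, sg m c i} \<inter> {j, sg m c j} = {}"
proof -
  have im: "i < m" "j < m" using i j by (auto simp: Pc_def)
  have 1: "i < sg m c i" "j < sg m c j" using i j by (auto simp: Pc_def)
  have "i \<noteq> sg m c j"
  proof
    assume "i = sg m c j"
    then have "sg m c i = j" using sg_invol[OF c im(2)] by simp
    then show False using 1 \<open>i = sg m c j\<close> by simp
  qed
  moreover have "sg m c i \<noteq> j"
  proof
    assume h: "sg m c i = j"
    then have "sg m c j = i" using sg_invol[OF c im(1)] by simp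
    then show False using 1 h by simp
  qed
  moreover have "sg m c i \<noteq> sg m c j" using sg_inj[OF c im] ne by blast
  ultimately show ?thesis using ne by auto
qed

lemma sg_H1: assumes ci: "c < m" "i < m" shows "(i + sg m c i) mod m = c"
proof -
  have "(i + sg m c i) mod m = (i + (c + m - i)) mod m" unfolding sg_def by (simp add: mod_add_right_eq)
  also have "i + (c + m - i) = c + m" using ci by simp
  finally show ?thesis using ci by simp
qed

lemma sg_H2: assumes ij: "i < j" "j < m" shows "sg m ((i + j) mod m) i = j"
proof -
  have "sg m ((i + j) mod m) i = ((i + j) mod m + m - i) mod m" by (simp add: sg_def)
  also have "int \<dots> = (int ((i+j) mod m) + int m - int i) mod int m"
    using ij by (simp add: of_nat_diff zmod_int)
  also have "\<dots> = ((int i + int j) mod int m + int m - int i) mod int m" by (simp add: zmod_int)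
  also have "\<dots> = ((int i + int j) + (int m - int i)) mod int m" by (metis add_diff_eq mod_add_left_eq)
  also have "(int i + int j) + (int m - int i) = int j + int m" by simp
  also have "(int j + int m) mod int m = int j" using ij by simp
  
  finally show ?thesis by simp
qed

lemma sum_pairs_decomp:
  fixes g :: "nat \<Rightarrow> nat \<Rightarrow> 'a::comm_monoid_add"
  shows "(\<Sum>i<m. \<Sum>j\<in>{i<..<m}. g i j) = (\<Sum>c<m. \<Sum>i\<in>Pc m c. g i (sg m c i))"
proof -
  have fin: "finite (Pc m c)" for c by (auto simp: Pc_def)
  have "(\<Sum>i<m. \<Sum>j\<in>{i<..<m}. g i j) = (\<Sum>(i,j)\<in>Sigma {..<m} (\<lambda>i. {i<..<m}). g i j)"
    by (rule sum.Sigma) auto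
  also have "\<dots> = (\<Sum>(c,i)\<in>Sigma {..<m} (Pc m). g i (sg m c i))"
    by (rule sum.reindex_bij_witness[where j="\<lambda>(i,j). ((i + j) mod m, i)" and i="\<lambda>(c,i). (i, sg m c i)"])
       (auto simp: Pc_def sg_H1 sg_H2 sg_lt)
  also have "\<dots> = (\<Sum>c<m. \<Sum>i\<in>Pc m c. g i (sg m c i))"
    by (rule sum.Sigma[symmetric]) (auto simp: fin)
  finally show ?thesis .
qed

lemma sum_card_ioo: "(\<Sum>i<m. card {i<..<m}) = m choose 2"
proof (induction m)
  case (Suc m)
  have "(\<Sum>i<Suc m. card {i<..<Suc m}) = (\<Sum>i<m. card {i<..<Suc m})" by simp
  also have "\<dots> = (\<Sum>i<m. card {i<..<m} + 1)" by (intro sum.cong) auto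
  also have "\<dots> = (\<Sum>i<m. card {i<..<m}) + m" by (subst sum.distrib) simp
  also have "\<dots> = (m choose 2) + m" using Suc by simp
  also have "\<dots> = Suc m choose 2" by (simp add: numeral_2_eq_2)
  finally show ?case .
qed simp

lemma sum_card_Pc: "(\<Sum>c<m. card (Pc m c)) = m choose 2"
  using sum_pairs_decomp[of "\<lambda>_ _. (1::nat)" m] sum_card_ioo[of m] by simp


lemma fix_dvd:
  assumes "c < m" "i < m" "sg m c i = i"
  shows "int m dvd (int c - 2 * int i)"
proof -
  have "int ((c + m - i) mod m) = int i" using assms unfolding sg_def by simp
  moreover have "int ((c + m - i) mod m) = (int c + int m - int i) mod int m"
    using assms by (simp add: zmod_int of_nat_diff)
  ultimately have "(int c + int m - int i) mod int m = int i" by simp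
  then have "(int c + int m - int i) mod int m = int i mod int m" using assms by simp
  then have "int m dvd (int c + int m - int i - int i)" by (simp add: mod_eq_dvd_iff)
  then have "int m dvd ((int c - 2 * int i) + int m)" by (simp add: algebra_simps)
  then show ?thesis by (simp add: dvd_add_left_iff)
qed

lemma fix_two:
  assumes c: "c < m" and i: "i < m" "sg m c i = i" and j: "j < m" "sg m c j = j" and ij: "i < j"
  shows "2 * (j - i) = m"
proof -
  have "int m dvd ((int c - 2 * int i) - (int c - 2 * int j))"
    using fix_dvd[OF c i] fix_dvd[OF c j] by (rule dvd_diff)
  then have d: "int m dvd (2 * (int j - int i))" by (simp add: algebra_simps)
  then obtain k where k: "2 * (int j - int i) = int m * k" by (auto simp: dvd_def)
  have pos: "0 < 2 * (int j - int i)" "2 * (int j - int i) < 2 * int m" using ij j by auto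
  have "k > 0"
  proof (rule ccontr)
    assume "\<not> k > 0"
    then have "int m * k \<le> 0" by (intro mult_nonneg_nonpos) auto
    then show False using pos k by linarith
  qed
  moreover have "k < 2"
  proof (rule ccontr)
    assume "\<not> k < 2"
    then have "int m * k \<ge> int m * 2" by (intro mult_left_mono) auto
    then show False using pos k by linarith
  qed
  ultimately have "k = 1" by simp
  then have "2 * (int j - int i) = int m" using k by simp
  then show ?thesis using ij by arith
qed

lemma card_fix: assumes c: "c < m" shows "card {i. i < m \<and> sg m c i = i} \<le> 2"
proof (cases "{i. i < m \<and> sg m c i = i} = {}")
  case True then show ?thesis by (simp only: True) simp
next
  case False
  let ?F = "{i. i < m \<and> sg m c i = i}"
  have fin: "finite ?F" by simp
  define i0 where "i0 = Min ?F"
  have i0: "i0 \<in> ?F" using Min_in[OF fin False] by (simp add: i0_def)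
  have "?F \<subseteq> {i0, i0 + m div 2}"
  proof
    fix i assume i: "i \<in> ?F"
    show "i \<in> {i0, i0 + m div 2}"
    proof (cases "i = i0")
      case False
      then have "i0 < i" using Min_le[OF fin i] by (simp add: i0_def)
      moreover have "2 * (i - i0) = m" using fix_two[OF c, of i0 i] i0 i \<open>i0 < i\<close> by auto
      then have "m div 2 = i - i0" by auto
      ultimately show ?thesis by auto
    qed simp
  qed
  then have "card ?F \<le> card {i0, i0 + m div 2}" by (intro card_mono) auto
  also have "\<dots> \<le> 2" by (simp add: card_insert_if)
  finally show ?thesis .
qed

lemma card_Pc_lower: assumes c: "c < m" shows "m \<le> 2 * card (Pc m c) + 2"
proof -
  let ?F = "{i. i < m \<and> sg m c i = i}"
  let ?P' = "{i. i < m \<and> sg m c i < i}"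
  have m: "0 < m" using c by simp
  have "{..<m} \<subseteq> Pc m c \<union> ?P' \<union> ?F" by (auto simp: Pc_def)
  moreover have "finite (Pc m c \<union> ?P' \<union> ?F)" by (auto simp: Pc_def)
  ultimately have "card {..<m} \<le> card (Pc m c \<union> ?P' \<union> ?F)" by (intro card_mono)
  then have "m \<le> card (Pc m c \<union> ?P' \<union> ?F)" by simp
  also have "\<dots> \<le> card (Pc m c \<union> ?P') + card ?F" by (rule card_Un_le)
  also have "\<dots> \<le> card (Pc m c) + card ?P' + card ?F" using card_Un_le by (intro add_right_mono) blast
  also have "card ?P' = card (Pc m c)"
  proof -
    have "sg m c ` Pc m c = ?P'"
    proof (intro equalityI subsetI)
      fix x assume "x \<in> sg m c ` Pc m c"
      then obtain i where i: "i \<in> Pc m c" "x = sg m c i" by auto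
      then show "x \<in> ?P'" using sg_invol[OF c, of i] sg_lt[OF m] by (auto simp: Pc_def)
    next
      fix x assume x: "x \<in> ?P'"
      then have "sg m c x \<in> Pc m c" using sg_invol[OF c, of x] sg_lt[OF m] by (auto simp: Pc_def)
      moreover have "x = sg m c (sg m c x)" using sg_invol[OF c, of x] x by simp
      ultimately show "x \<in> sg m c ` Pc m c" by blast
    qed
    moreover have "inj_on (sg m c) (Pc m c)"
      using sg_inj[OF c] by (auto simp: inj_on_def Pc_def)
    ultimately show ?thesis by (metis card_image)
  qed
  finally show ?thesis using card_fix[OF c] by linarith
qed

lemma rot_inj:
  fixes i c c' m :: nat
  assumes h: "(i + c) mod m = (i + c') mod m" and lt: "c < m" "c' < m"
  shows "c = c'"
proof -
  have *: "c = c'" if h': "(i + a) mod m = (i + b) mod m" and le: "a \<le> b" and "b < m" and "a < m"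
      and ab: "a = c \<and> b = c' \<or> a = c' \<and> b = c" for a b
  proof -
    obtain s where "i + b = i + a + m * s" using mod_eq_nat1E[OF h'[symmetric]] le by auto
    then have "b = a + m * s" by simp
    then have "s = 0" using \<open>b < m\<close> by (cases s) auto
    then show ?thesis using \<open>b = a + m * s\<close> ab by auto
  qed
  show ?thesis
  proof (cases "c \<le> c'")
    case True then show ?thesis using * h lt by blast
  next
    case False then show ?thesis using *[of c' c] h lt by auto
  qed
qed

lemma rot_sum:
  fixes g :: "nat \<Rightarrow> 'a::comm_monoid_add"
  assumes m: "0 < m"
  shows "(\<Sum>c<m. g ((i + c) mod m)) = (\<Sum>j<m. g j)"
proof -
  have inj: "inj_on (\<lambda>c. (i + c) mod m) {..<m}" by (auto simp: inj_on_def intro: rot_inj)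
  have img: "(\<lambda>c. (i + c) mod m) ` {..<m} = {..<m}"
    by (rule endo_inj_surj) (use m inj in auto)
  show ?thesis using sum.reindex[OF inj, of g] img by simp
qed

lemma sorted_nth_le_count:
  fixes xs :: "'a::linorder list"
  assumes s: "sorted xs" and k: "k < length xs" and c: "k < length (filter (\<lambda>x. x \<le> v) xs)"
  shows "xs ! k \<le> v"
proof (rule ccontr)
  assume "\<not> xs ! k \<le> v"
  then have lt: "v < xs ! k" by simp
  have "{j. j < length xs \<and> xs ! j \<le> v} \<subseteq> {..<k}"
  proof
    fix j assume j: "j \<in> {j. j < length xs \<and> xs ! j \<le> v}"
    show "j \<in> {..<k}"
    proof (rule ccontr)
      assume "j \<notin> {..<k}"
      then have "k \<le> j" by simp
      then have "xs ! k \<le> xs ! j" using s j by (simp add: sorted_nth_mono)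
      moreover have "xs ! j \<le> v" using j by simp
      ultimately have "xs ! k \<le> v" by (rule order.trans)
      then show False using lt by simp
    qed
  qed
  then have "card {j. j < length xs \<and> xs ! j \<le> v} \<le> k"
    by (metis card_lessThan card_mono finite_lessThan)
  then show False using c by (simp add: length_filter_conv_card)
qed

lemma count_nth_le:
  fixes xs :: "'a::linorder list"
  assumes s: "sorted xs" and k: "k < length xs"
  shows "k < length (filter (\<lambda>x. x \<le> xs ! k) xs)"
proof -
  have "{..k} \<subseteq> {j. j < length xs \<and> xs ! j \<le> xs ! k}"
    using s k by (auto simp: sorted_nth_mono)
  then have "card {..k} \<le> card {j. j < length xs \<and> xs ! j \<le> xs ! k}"
    by (intro card_mono) auto
  then show ?thesis by (simp add: length_filter_conv_card)
qed

lemma length_filter_sort: "length (filter P (sort xs)) = length (filter P xs)"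
  by (metis mset_filter mset_sort size_mset)

lemma length_filter_map_upt: "length (filter P (map a [0..<d])) = card {i. i < d \<and> P (a i)}"
  unfolding length_filter_conv_card by (intro arg_cong[where f=card]) auto

lemma sort_nth_shift:
  fixes a b :: "nat \<Rightarrow> real"
  assumes ab: "\<And>i. i < d \<Longrightarrow> a i \<le> b i + t" and k: "k < d"
  shows "sort (map a [0..<d]) ! k \<le> sort (map b [0..<d]) ! k + t"
proof -
  let ?sa = "sort (map a [0..<d])" and ?sb = "sort (map b [0..<d])"
  let ?v = "?sb ! k"
  have "k < length (filter (\<lambda>x. x \<le> ?v) ?sb)"
    by (rule count_nth_le) (use k in auto)
  then have "k < card {i. i < d \<and> b i \<le> ?v}"
    by (simp only: length_filter_sort length_filter_map_upt)
  also have "\<dots> \<le> card {i. i < d \<and> a i \<le> ?v + t}"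
    by (intro card_mono) (use ab in force)+
  finally have "k < length (filter (\<lambda>x. x \<le> ?v + t) ?sa)"
    by (simp only: length_filter_sort length_filter_map_upt)
  then show ?thesis
    by (intro sorted_nth_le_count) (use k in auto)
qed

lemma sort_nth_diff:
  fixes a b :: "nat \<Rightarrow> real"
  assumes ab: "\<And>i. i < d \<Longrightarrow> \<bar>a i - b i\<bar> \<le> t" and k: "k < d"
  shows "\<bar>sort (map a [0..<d]) ! k - sort (map b [0..<d]) ! k\<bar> \<le> t"
proof -
  have "sort (map a [0..<d]) ! k \<le> sort (map b [0..<d]) ! k + t"
  proof (rule sort_nth_shift)
    fix i assume i: "i < d" show "a i \<le> b i + t" using ab[OF i] unfolding abs_le_iff by linarith
  qed (rule k)
  moreover have "sort (map b [0..<d]) ! k \<le> sort (map a [0..<d]) ! k + t"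
  proof (rule sort_nth_shift)
    fix i assume i: "i < d" show "b i \<le> a i + t" using ab[OF i] unfolding abs_le_iff by linarith
  qed (rule k)
  ultimately show ?thesis by (simp add: abs_le_iff)
qed

locale setting =
  fixes F G D :: "'a measure" and m1 m2 :: nat and f :: "'a \<times> 'a \<Rightarrow> real" and B :: real
  assumes PF: "prob_space F" and PG: "prob_space G"
    and SF: "sets F = sets D" and SG: "sets G = sets D"
    and f: "f \<in> borel_measurable (D \<Otimes>\<^sub>M D)"
    and fb: "\<And>z. 0 \<le> f z \<and> f z \<le> B" and Bpos: "B > 0"
begin

definition Mix :: "nat \<Rightarrow> 'a measure" where "Mix = (\<lambda>i. if i < m1 then F else G)"

lemma P: "\<And>i. i \<in> {..<m1+m2} \<Longrightarrow> prob_space (Mix i)"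
  using PF PG by (auto simp: Mix_def)

lemma S: "\<And>i. i \<in> {..<m1+m2} \<Longrightarrow> sets (Mix i) = sets D"
  using SF SG by (auto simp: Mix_def)

lemma within_bound:
  assumes H: "\<And>i. i < m \<Longrightarrow> off + i < m1 + m2 \<and> Mix (off + i) = Hm" and m4: "4 \<le> m"
    and q: "0 < q" "q \<le> real m / 4" and s: "s > 0"
  shows "measure (PiM {..<m1+m2} Mix) {z\<in>space (PiM {..<m1+m2} Mix).
      \<bar>(\<Sum>i<m. \<Sum>j\<in>{i<..<m}. f (z (off+i), z (off+j))) / real (m choose 2) - (\<integral>x. (\<integral>y. f (x,y) \<partial>Hm) \<partial>Hm)\<bar> > s}
    \<le> 2 * real m * exp (-2 * q * s\<^sup>2 / B\<^sup>2)"
proof -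
  let ?\<theta> = "(\<integral>x. (\<integral>y. f (x,y) \<partial>Hm) \<partial>Hm)"
  have eq: "(\<Sum>i<m. \<Sum>j\<in>{i<..<m}. f (z (off+i), z (off+j))) = (\<Sum>c\<in>{..<m}. \<Sum>l\<in>Pc m c. f (z (off + l), z (off + sg m c l)))" for z
    by (rule sum_pairs_decomp)
  have "measure (PiM {..<m1+m2} Mix) {z\<in>space (PiM {..<m1+m2} Mix).
      \<bar>(\<Sum>c\<in>{..<m}. \<Sum>l\<in>Pc m c. f (z (off + l), z (off + sg m c l))) / real (m choose 2) - ?\<theta>\<bar> > s}
    \<le> 2 * real (card {..<m}) * exp (-2 * q * s\<^sup>2 / B\<^sup>2)"
  proof (rule color_union[where D=D and B=B and C="{..<m}" and L="Pc m" and \<alpha>="\<lambda>c l. off + l"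
        and \<beta>="\<lambda>c l. off + sg m c l" and \<theta>="?\<theta>" and q=q and N="real (m choose 2)" and s=s
        and I="{..<m1+m2}" and M=Mix and f=f])
    show "finite {..<m1+m2}" by simp
    show "\<And>i. i \<in> {..<m1+m2} \<Longrightarrow> prob_space (Mix i)" by (rule P)
    show "\<And>i. i \<in> {..<m1+m2} \<Longrightarrow> sets (Mix i) = sets D" by (rule S)
    show "f \<in> borel_measurable (D \<Otimes>\<^sub>M D)" by (rule f)
    show "\<And>z. 0 \<le> f z \<and> f z \<le> B" by (rule fb)
    show "B > 0" by (rule Bpos)
    show "finite {..<m}" by simp
    show "\<And>c. c \<in> {..<m} \<Longrightarrow> finite (Pc m c)" by (auto simp: Pc_def)
    fix c assume c: "c \<in> {..<m}"
    then have cm: "c < m" by simp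
    show "\<And>l. l \<in> Pc m c \<Longrightarrow> off + l \<in> {..<m1+m2} \<and> off + sg m c l \<in> {..<m1+m2} \<and> off + l \<noteq> off + sg m c l"
      using Pc_props[OF cm] H by auto
    show "\<And>l l'. l \<in> Pc m c \<Longrightarrow> l' \<in> Pc m c \<Longrightarrow> l \<noteq> l' \<Longrightarrow>
            {off + l, off + sg m c l} \<inter> {off + l', off + sg m c l'} = {}"
    proof -
      fix l l' assume "l \<in> Pc m c" "l' \<in> Pc m c" "l \<noteq> l'"
      then have "{l, sg m c l} \<inter> {l', sg m c l'} = {}" by (rule Pc_disj[OF cm])
      then show "{off + l, off + sg m c l} \<inter> {off + l', off + sg m c l'} = {}" by auto
    qed
    show "\<And>l. l \<in> Pc m c \<Longrightarrow> (\<integral>x. f (x (off + l), x (off + sg m c l)) \<partial>PiM {..<m1+m2} Mix) = ?\<theta>"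
    proof -
      fix l assume l: "l \<in> Pc m c"
      have pl: "l < m" "sg m c l < m" "l \<noteq> sg m c l" using Pc_props[OF cm l] by auto
      have "(\<integral>x. f (x (off + l), x (off + sg m c l)) \<partial>PiM {..<m1+m2} Mix)
            = (\<integral>x. (\<integral>y. f (x,y) \<partial>Mix (off + sg m c l)) \<partial>Mix (off + l))"
        by (rule pair_mean[where D=D and B=B]) (use P S f fb H pl in auto)
      then show "(\<integral>x. f (x (off + l), x (off + sg m c l)) \<partial>PiM {..<m1+m2} Mix) = ?\<theta>"
        using H pl by simp
    qed
    show "Pc m c \<noteq> {} \<Longrightarrow> q \<le> real (card (Pc m c))"
    proof -
      have "m \<le> 2 * card (Pc m c) + 2" by (rule card_Pc_lower[OF cm])
      then have "real m \<le> 2 * real (card (Pc m c)) + 2" by linarith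
      then show ?thesis using q m4 by linarith
    qed
  next
    have "(\<Sum>c\<in>{..<m}. real (card (Pc m c))) = real (\<Sum>c<m. card (Pc m c))" by simp
    also have "\<dots> = real (m choose 2)" by (simp only: sum_card_Pc)
    finally show "real (m choose 2) = (\<Sum>c\<in>{..<m}. real (card (Pc m c)))" by simp
    have "m choose 2 > 0" using m4 by (simp add: zero_less_binomial_iff)
    then show "real (m choose 2) > 0" by simp
  qed (rule s)
  then show ?thesis by (simp add: eq)
qed


lemma cross_bound:
  assumes q: "0 < q" "q \<le> real m1" "q \<le> real m2" and s: "s > 0"
  shows "measure (PiM {..<m1+m2} Mix) {z\<in>space (PiM {..<m1+m2} Mix).
      \<bar>(\<Sum>i<m1. \<Sum>j<m2. f (z i, z (m1 + j))) / (real m1 * real m2) - (\<integral>x. (\<integral>y. f (x,y) \<partial>G) \<partial>F)\<bar> > s}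
    \<le> 2 * real (m1 + m2) * exp (-2 * q * s\<^sup>2 / B\<^sup>2)"
proof -
  let ?\<theta> = "(\<integral>x. (\<integral>y. f (x,y) \<partial>G) \<partial>F)"
  let ?R = "PiM {..<m1+m2} Mix"
  have m1: "0 < m1" and m2: "0 < m2" using q by auto
  have mean: "(\<integral>x. f (x a, x b) \<partial>?R) = ?\<theta>" if "a < m1" "m1 \<le> b" "b < m1 + m2" for a b
  proof -
    have "(\<integral>x. f (x a, x b) \<partial>?R) = (\<integral>x. (\<integral>y. f (x,y) \<partial>Mix b) \<partial>Mix a)"
      by (rule pair_mean[where D=D and B=B]) (use P S f fb that in auto)
    then show ?thesis using that by (simp add: Mix_def)
  qed
  have ex: "exp (-2 * q * s\<^sup>2 / B\<^sup>2) \<ge> 0" by simp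
  show ?thesis
  proof (cases "m1 \<le> m2")
    case True
    have eq: "(\<Sum>i<m1. \<Sum>j<m2. f (z i, z (m1 + j))) = (\<Sum>c\<in>{..<m2}. \<Sum>l\<in>{..<m1}. f (z l, z (m1 + (l + c) mod m2)))" for z
    proof -
      have "(\<Sum>i<m1. \<Sum>j<m2. f (z i, z (m1 + j))) = (\<Sum>i<m1. \<Sum>c<m2. f (z i, z (m1 + (i + c) mod m2)))"
        by (rule sum.cong[OF refl]) (use rot_sum[OF m2, of "\<lambda>j. f (z _, z (m1 + j))"] in simp)
      also have "\<dots> = (\<Sum>c\<in>{..<m2}. \<Sum>l\<in>{..<m1}. f (z l, z (m1 + (l + c) mod m2)))" by (rule sum.swap)
      finally show ?thesis .
    qed
    have "measure ?R {z\<in>space ?R.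
      \<bar>(\<Sum>c\<in>{..<m2}. \<Sum>l\<in>{..<m1}. f (z l, z (m1 + (l + c) mod m2))) / (real m1 * real m2) - ?\<theta>\<bar> > s}
      \<le> 2 * real (card {..<m2}) * exp (-2 * q * s\<^sup>2 / B\<^sup>2)"
    proof (rule color_union[where D=D and B=B and C="{..<m2}" and L="\<lambda>_. {..<m1}" and \<alpha>="\<lambda>c l. l"
        and \<beta>="\<lambda>c l. m1 + (l + c) mod m2" and \<theta>="?\<theta>" and q=q and N="real m1 * real m2" and s=s
        and I="{..<m1+m2}" and M=Mix and f=f])
      show "finite {..<m1+m2}" by simp
      show "\<And>i. i \<in> {..<m1+m2} \<Longrightarrow> prob_space (Mix i)" by (rule P)
      show "\<And>i. i \<in> {..<m1+m2} \<Longrightarrow> sets (Mix i) = sets D" by (rule S)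
      show "f \<in> borel_measurable (D \<Otimes>\<^sub>M D)" by (rule f)
      show "\<And>z. 0 \<le> f z \<and> f z \<le> B" by (rule fb)
      show "B > 0" by (rule Bpos)
      show "finite {..<m2}" by simp
      show "\<And>c. c \<in> {..<m2} \<Longrightarrow> finite {..<m1}" by simp
      fix c assume c: "c \<in> {..<m2}"
      show "\<And>l. l \<in> {..<m1} \<Longrightarrow> l \<in> {..<m1+m2} \<and> m1 + (l + c) mod m2 \<in> {..<m1+m2} \<and> l \<noteq> m1 + (l + c) mod m2"
        using m2 by auto
      show "\<And>l l'. l \<in> {..<m1} \<Longrightarrow> l' \<in> {..<m1} \<Longrightarrow> l \<noteq> l' \<Longrightarrow>
            {l, m1 + (l + c) mod m2} \<inter> {l', m1 + (l' + c) mod m2} = {}"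
      proof -
        fix l l' assume l: "l \<in> {..<m1}" "l' \<in> {..<m1}" "l \<noteq> l'"
        have "(l + c) mod m2 \<noteq> (l' + c) mod m2"
          using rot_inj[of c l m2 l'] l True by (auto simp: add.commute)
        then show "{l, m1 + (l + c) mod m2} \<inter> {l', m1 + (l' + c) mod m2} = {}" using l by auto
      qed
      show "\<And>l. l \<in> {..<m1} \<Longrightarrow> (\<integral>x. f (x l, x (m1 + (l + c) mod m2)) \<partial>?R) = ?\<theta>"
        using m2 by (intro mean) auto
      show "{..<m1} \<noteq> {} \<Longrightarrow> q \<le> real (card {..<m1})" using q by simp
    next
      show "real m1 * real m2 = (\<Sum>c\<in>{..<m2}. real (card {..<m1}))" by simp
      show "real m1 * real m2 > 0" using m1 m2 by simp
    qed (rule s)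
    also have "\<dots> \<le> 2 * real (m1 + m2) * exp (-2 * q * s\<^sup>2 / B\<^sup>2)"
      using ex by (intro mult_right_mono) auto
    finally show ?thesis by (simp add: eq)
  next
    case False
    have eq: "(\<Sum>i<m1. \<Sum>j<m2. f (z i, z (m1 + j))) = (\<Sum>c\<in>{..<m1}. \<Sum>l\<in>{..<m2}. f (z ((l + c) mod m1), z (m1 + l)))" for z
    proof -
      have "(\<Sum>i<m1. \<Sum>j<m2. f (z i, z (m1 + j))) = (\<Sum>j<m2. \<Sum>i<m1. f (z i, z (m1 + j)))" by (rule sum.swap)
      also have "\<dots> = (\<Sum>j<m2. \<Sum>c<m1. f (z ((j + c) mod m1), z (m1 + j)))"
        by (rule sum.cong[OF refl]) (use rot_sum[OF m1, of "\<lambda>i. f (z i, z (m1 + _))"] in simp)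
      also have "\<dots> = (\<Sum>c\<in>{..<m1}. \<Sum>l\<in>{..<m2}. f (z ((l + c) mod m1), z (m1 + l)))" by (rule sum.swap)
      finally show ?thesis .
    qed
    have "measure ?R {z\<in>space ?R.
      \<bar>(\<Sum>c\<in>{..<m1}. \<Sum>l\<in>{..<m2}. f (z ((l + c) mod m1), z (m1 + l))) / (real m1 * real m2) - ?\<theta>\<bar> > s}
      \<le> 2 * real (card {..<m1}) * exp (-2 * q * s\<^sup>2 / B\<^sup>2)"
    proof (rule color_union[where D=D and B=B and C="{..<m1}" and L="\<lambda>_. {..<m2}" and \<alpha>="\<lambda>c l. (l + c) mod m1"
        and \<beta>="\<lambda>c l. m1 + l" and \<theta>="?\<theta>" and q=q and N="real m1 * real m2" and s=s
        and I="{..<m1+m2}" and M=Mix and f=f])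
      show "finite {..<m1+m2}" by simp
      show "\<And>i. i \<in> {..<m1+m2} \<Longrightarrow> prob_space (Mix i)" by (rule P)
      show "\<And>i. i \<in> {..<m1+m2} \<Longrightarrow> sets (Mix i) = sets D" by (rule S)
      show "f \<in> borel_measurable (D \<Otimes>\<^sub>M D)" by (rule f)
      show "\<And>z. 0 \<le> f z \<and> f z \<le> B" by (rule fb)
      show "B > 0" by (rule Bpos)
      show "finite {..<m1}" by simp
      show "\<And>c. c \<in> {..<m1} \<Longrightarrow> finite {..<m2}" by simp
      fix c assume c: "c \<in> {..<m1}"
      show "\<And>l. l \<in> {..<m2} \<Longrightarrow> (l + c) mod m1 \<in> {..<m1+m2} \<and> m1 + l \<in> {..<m1+m2} \<and> (l + c) mod m1 \<noteq> m1 + l"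
      proof -
        fix l assume "l \<in> {..<m2}"
        moreover have "(l + c) mod m1 < m1" using m1 by simp
        ultimately show "(l + c) mod m1 \<in> {..<m1+m2} \<and> m1 + l \<in> {..<m1+m2} \<and> (l + c) mod m1 \<noteq> m1 + l" by auto
      qed
      show "\<And>l l'. l \<in> {..<m2} \<Longrightarrow> l' \<in> {..<m2} \<Longrightarrow> l \<noteq> l' \<Longrightarrow>
            {(l + c) mod m1, m1 + l} \<inter> {(l' + c) mod m1, m1 + l'} = {}"
      proof -
        fix l l' assume l: "l \<in> {..<m2}" "l' \<in> {..<m2}" "l \<noteq> l'"
        have "(l + c) mod m1 \<noteq> (l' + c) mod m1"
          using rot_inj[of c l m1 l'] l False by (auto simp: add.commute)
        moreover have "(l + c) mod m1 < m1" "(l' + c) mod m1 < m1" using m1 by auto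
        then have "m1 + l' \<noteq> (l + c) mod m1" "m1 + l \<noteq> (l' + c) mod m1" by linarith+
        ultimately show "{(l + c) mod m1, m1 + l} \<inter> {(l' + c) mod m1, m1 + l'} = {}" using l by auto
      qed
      show "\<And>l. l \<in> {..<m2} \<Longrightarrow> (\<integral>x. f (x ((l + c) mod m1), x (m1 + l)) \<partial>?R) = ?\<theta>"
        using m1 by (intro mean) auto
      show "{..<m2} \<noteq> {} \<Longrightarrow> q \<le> real (card {..<m2})" using q by simp
    next
      show "real m1 * real m2 = (\<Sum>c\<in>{..<m1}. real (card {..<m2}))" by simp
      show "real m1 * real m2 > 0" using m1 m2 by simp
    qed (rule s)
    also have "\<dots> \<le> 2 * real (m1 + m2) * exp (-2 * q * s\<^sup>2 / B\<^sup>2)"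
      using ex by (intro mult_right_mono) auto
    finally show ?thesis by (simp add: eq)
  qed
qed

end

lemma fk_meas:
  fixes \<gamma> :: "real \<Rightarrow> real"
  assumes gc: "continuous_on {0..} \<gamma>" and k: "k < dd"
  shows "(\<lambda>(x::nat \<Rightarrow> real, y::nat \<Rightarrow> real). \<gamma> (\<bar>x k - y k\<bar>^2))
           \<in> borel_measurable (PiM {..<dd} (\<lambda>_. lborel) \<Otimes>\<^sub>M PiM {..<dd} (\<lambda>_. lborel))"
proof -
  have "continuous_on UNIV (\<lambda>u::real. \<gamma> (\<bar>u\<bar>^2))"
    by (rule continuous_on_compose2[OF gc]) (auto intro!: continuous_intros)
  then have psi[measurable]: "(\<lambda>u::real. \<gamma> (\<bar>u\<bar>^2)) \<in> borel_measurable borel"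
    by (rule borel_measurable_continuous_onI)
  have c1: "(\<lambda>x::nat \<Rightarrow> real. x k) \<in> borel_measurable (PiM {..<dd} (\<lambda>_. lborel))"
    using k measurable_component_singleton[of k "{..<dd}" "\<lambda>_. lborel"]
    by (simp add: measurable_cong_sets[OF refl sets_lborel])
  have "(\<lambda>p::(nat \<Rightarrow> real) \<times> (nat \<Rightarrow> real). fst p k - snd p k)
          \<in> borel_measurable (PiM {..<dd} (\<lambda>_. lborel) \<Otimes>\<^sub>M PiM {..<dd} (\<lambda>_. lborel))"
    using c1 by (intro borel_measurable_diff measurable_compose[OF measurable_fst] measurable_compose[OF measurable_snd]) auto
  from measurable_compose[OF this psi] show ?thesis by (simp add: case_prod_beta')
qed


lemma comb3:
  fixes a x b y c w s t :: real
  assumes "\<bar>a - x\<bar> \<le> s" "\<bar>b - y\<bar> \<le> s" "\<bar>c - w\<bar> \<le> s" "t = 4 * s"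
  shows "\<bar>2 * a - b - c - (2 * x - y - w)\<bar> \<le> t"
  using assms by (simp add: abs_le_iff)

lemma fixed_n:
  fixes \<gamma> :: "real \<Rightarrow> real" and F' G' :: "(nat \<Rightarrow> real) measure" and m1 m2 dd :: nat and t q0 B :: real
  assumes PF: "prob_space F'" and PG: "prob_space G'"
    and SF: "sets F' = sets (PiM {..<dd} (\<lambda>_. lborel))" and SG: "sets G' = sets (PiM {..<dd} (\<lambda>_. lborel))"
    and gc: "continuous_on {0..} \<gamma>" and gb: "\<And>u. 0 \<le> u \<Longrightarrow> 0 \<le> \<gamma> u \<and> \<gamma> u \<le> B" and Bpos: "B > 0"
    and m: "4 \<le> m1" "4 \<le> m2" and q0: "0 < q0" "q0 \<le> real m1" "q0 \<le> real m2" and t: "t > 0"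
    and dd: "1 \<le> dd"
  shows "measure (PiM {..<m1} (\<lambda>_. F') \<Otimes>\<^sub>M PiM {..<m2} (\<lambda>_. G'))
        {\<omega> \<in> space (PiM {..<m1} (\<lambda>_. F') \<Otimes>\<^sub>M PiM {..<m2} (\<lambda>_. G')).
          (MAX k\<in>{..<dd}.
             \<bar>ordstat (energy_hat_coord \<gamma> m1 m2 (fst \<omega>) (snd \<omega>)) dd k
              - ordstat (energy_coord \<gamma> F' G') dd k\<bar>) > t}
      \<le> real dd * (6 * real (m1 + m2) * exp (- q0 * t\<^sup>2 / (32 * B\<^sup>2)))"
proof -
  let ?D = "PiM {..<dd} (\<lambda>_. lborel) :: (nat \<Rightarrow> real) measure"
  let ?Q = "PiM {..<m1} (\<lambda>_. F') \<Otimes>\<^sub>M PiM {..<m2} (\<lambda>_. G')"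
  define Mx where "Mx = (\<lambda>i. if i < m1 then F' else G')"
  let ?R = "PiM {..<m1+m2} Mx"
  define Phi where "Phi = (\<lambda>\<omega>::(nat \<Rightarrow> nat \<Rightarrow> real) \<times> (nat \<Rightarrow> nat \<Rightarrow> real). \<lambda>i\<in>{..<m1+m2}. if i < m1 then fst \<omega> i else snd \<omega> (i - m1))"
  define fk where "fk k = (\<lambda>(x::nat \<Rightarrow> real, y::nat \<Rightarrow> real). \<gamma> (\<bar>x k - y k\<bar>^2))" for k
  define s where "s = t / 4"
  have s: "s > 0" using t by (simp add: s_def)
  have fkb: "0 \<le> fk k z \<and> fk k z \<le> B" for k z using gb by (auto simp: fk_def split: prod.split)
  have fkm: "fk k \<in> borel_measurable (?D \<Otimes>\<^sub>M ?D)" if "k < dd" for k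
    unfolding fk_def by (rule fk_meas[OF gc that])
  have sett: "setting F' G' ?D (fk k) B" if "k < dd" for k
    by (intro setting.intro PF PG SF SG fkm[OF that] fkb Bpos)
  define th1 where "th1 k = (\<integral>x. (\<integral>y. fk k (x,y) \<partial>G') \<partial>F')" for k
  define th2 where "th2 k = (\<integral>x. (\<integral>y. fk k (x,y) \<partial>F') \<partial>F')" for k
  define th3 where "th3 k = (\<integral>x. (\<integral>y. fk k (x,y) \<partial>G') \<partial>G')" for k
  define T1 where "T1 k z = (\<Sum>i<m1. \<Sum>j<m2. fk k (z i, z (m1 + j)))" for k and z :: "nat \<Rightarrow> nat \<Rightarrow> real"
  define T2 where "T2 k z = (\<Sum>i<m1. \<Sum>j\<in>{i<..<m1}. fk k (z (0+i), z (0+j)))" for k and z :: "nat \<Rightarrow> nat \<Rightarrow> real"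
  define T3 where "T3 k z = (\<Sum>i<m2. \<Sum>j\<in>{i<..<m2}. fk k (z (m1+i), z (m1+j)))" for k and z :: "nat \<Rightarrow> nat \<Rightarrow> real"
  define A1 where "A1 k = {z\<in>space ?R. \<bar>T1 k z / (real m1 * real m2) - th1 k\<bar> > s}" for k
  define A2 where "A2 k = {z\<in>space ?R. \<bar>T2 k z / real (m1 choose 2) - th2 k\<bar> > s}" for k
  define A3 where "A3 k = {z\<in>space ?R. \<bar>T3 k z / real (m2 choose 2) - th3 k\<bar> > s}" for k
  define U where "U = (\<Union>k\<in>{..<dd}. A1 k \<union> A2 k \<union> A3 k)"
  define bnd where "bnd = 2 * real (m1 + m2) * exp (-2 * (q0/4) * s\<^sup>2 / B\<^sup>2)"
  have PR: "prob_space ?R" by (rule prob_space_PiM) (use PF PG in \<open>auto simp: Mx_def\<close>)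
  have SR: "\<And>i. i \<in> {..<m1+m2} \<Longrightarrow> sets (Mx i) = sets ?D" using SF SG by (auto simp: Mx_def)
  have pmk: "(\<lambda>z. fk k (z a, z b)) \<in> borel_measurable ?R" if "k < dd" "a < m1 + m2" "b < m1 + m2" for k a b
    by (rule pair_meas[where D="?D"]) (use SR fkm[OF that(1)] that in auto)
  have Am: "A1 k \<in> sets ?R \<and> A2 k \<in> sets ?R \<and> A3 k \<in> sets ?R" if k: "k < dd" for k
  proof -
    have [measurable]: "T1 k \<in> borel_measurable ?R" unfolding T1_def
      by (intro borel_measurable_sum pmk[OF k]) auto
    have [measurable]: "T2 k \<in> borel_measurable ?R" unfolding T2_def
      by (intro borel_measurable_sum pmk[OF k]) auto
    have [measurable]: "T3 k \<in> borel_measurable ?R" unfolding T3_def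
      by (intro borel_measurable_sum pmk[OF k]) auto
    show ?thesis unfolding A1_def A2_def A3_def by (intro conjI; measurable)
  qed
  have Um: "U \<in> sets ?R" unfolding U_def using Am by auto
  have B1: "measure ?R (A1 k) \<le> bnd" if k: "k < dd" for k
  proof -
    interpret st: setting F' G' ?D m1 m2 "fk k" B by (rule sett[OF k])
    show ?thesis unfolding A1_def T1_def th1_def bnd_def
      using st.cross_bound[of "q0/4" s] q0 s by (simp add: st.Mix_def Mx_def)
  qed
  have B2: "measure ?R (A2 k) \<le> bnd" if k: "k < dd" for k
  proof -
    interpret st: setting F' G' ?D m1 m2 "fk k" B by (rule sett[OF k])
    have "measure ?R (A2 k) \<le> 2 * real m1 * exp (-2 * (q0/4) * s\<^sup>2 / B\<^sup>2)"
      unfolding A2_def T2_def th2_def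
      using st.within_bound[of m1 0 F' "q0/4" s] q0 s m by (simp add: st.Mix_def Mx_def)
    also have "\<dots> \<le> bnd" unfolding bnd_def by (intro mult_right_mono) auto
    finally show ?thesis .
  qed
  have B3: "measure ?R (A3 k) \<le> bnd" if k: "k < dd" for k
  proof -
    interpret st: setting F' G' ?D m1 m2 "fk k" B by (rule sett[OF k])
    have "measure ?R (A3 k) \<le> 2 * real m2 * exp (-2 * (q0/4) * s\<^sup>2 / B\<^sup>2)"
      unfolding A3_def T3_def th3_def
      using st.within_bound[of m2 m1 G' "q0/4" s] q0 s m by (simp add: st.Mix_def Mx_def)
    also have "\<dots> \<le> bnd" unfolding bnd_def by (intro mult_right_mono) auto
    finally show ?thesis .
  qed
  have RU: "measure ?R U \<le> real dd * (3 * bnd)"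
  proof -
    interpret R: prob_space ?R by (rule PR)
    have "measure ?R U \<le> (\<Sum>k\<in>{..<dd}. measure ?R (A1 k \<union> A2 k \<union> A3 k))"
      unfolding U_def using Am by (intro R.finite_measure_subadditive_finite) auto
    also have "\<dots> \<le> (\<Sum>k\<in>{..<dd}. 3 * bnd)"
    proof (rule sum_mono)
      fix k assume "k \<in> {..<dd}"
      then have k: "k < dd" by simp
      have "measure ?R (A1 k \<union> A2 k \<union> A3 k) \<le> measure ?R (A1 k \<union> A2 k) + measure ?R (A3 k)"
        using Am[OF k] by (intro measure_Un_le) auto
      also have "\<dots> \<le> measure ?R (A1 k) + measure ?R (A2 k) + measure ?R (A3 k)"
        using Am[OF k] measure_Un_le[of "A1 k" ?R "A2 k"] by auto
      finally show "measure ?R (A1 k \<union> A2 k \<union> A3 k) \<le> 3 * bnd" using B1[OF k] B2[OF k] B3[OF k] by linarith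
    qed
    finally show ?thesis by simp
  qed
  have Phim: "Phi \<in> measurable ?Q ?R" and distrQ: "distr ?Q ?R Phi = ?R"
    using distr_Phi[OF PF PG, of m1 m2] unfolding Phi_def Mx_def by auto
  have QU: "measure ?Q (Phi -` U \<inter> space ?Q) = measure ?R U"
    using measure_distr[OF Phim Um] distrQ by simp
  have incl: "{\<omega> \<in> space ?Q.
          (MAX k\<in>{..<dd}.
             \<bar>ordstat (energy_hat_coord \<gamma> m1 m2 (fst \<omega>) (snd \<omega>)) dd k
              - ordstat (energy_coord \<gamma> F' G') dd k\<bar>) > t} \<subseteq> Phi -` U \<inter> space ?Q"
  proof
    fix \<omega> assume w: "\<omega> \<in> {\<omega> \<in> space ?Q.
          (MAX k\<in>{..<dd}.
             \<bar>ordstat (energy_hat_coord \<gamma> m1 m2 (fst \<omega>) (snd \<omega>)) dd k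
              - ordstat (energy_coord \<gamma> F' G') dd k\<bar>) > t}"
    show "\<omega> \<in> Phi -` U \<inter> space ?Q"
    proof (rule ccontr)
      assume nU: "\<omega> \<notin> Phi -` U \<inter> space ?Q"
      have wQ: "\<omega> \<in> space ?Q" using w by simp
      have PhiQ: "Phi \<omega> \<in> space ?R" using Phim wQ by (rule measurable_space)
      let ?z = "Phi \<omega>"
      have z1: "?z i = fst \<omega> i" if "i < m1" for i using that by (simp add: Phi_def)
      have z2: "?z (m1 + j) = snd \<omega> j" if "j < m2" for j using that by (simp add: Phi_def)
      have each: "\<bar>energy_hat_coord \<gamma> m1 m2 (fst \<omega>) (snd \<omega>) k - energy_coord \<gamma> F' G' k\<bar> \<le> t" if k: "k < dd" for k
      proof -
        have nA: "?z \<notin> A1 k \<union> A2 k \<union> A3 k" using nU wQ k unfolding U_def by auto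
        have n1: "\<bar>T1 k ?z / (real m1 * real m2) - th1 k\<bar> \<le> s"
          using nA PhiQ unfolding A1_def by auto
        have n2: "\<bar>T2 k ?z / real (m1 choose 2) - th2 k\<bar> \<le> s"
          using nA PhiQ unfolding A2_def by auto
        have n3: "\<bar>T3 k ?z / real (m2 choose 2) - th3 k\<bar> \<le> s"
          using nA PhiQ unfolding A3_def by auto
        have e1: "T1 k ?z = (\<Sum>i<m1. \<Sum>j<m2. \<gamma> (\<bar>fst \<omega> i k - snd \<omega> j k\<bar>^2))"
          unfolding T1_def fk_def by (intro sum.cong refl) (simp add: z1 z2)
        have e2: "T2 k ?z = (\<Sum>i<m1. \<Sum>j\<in>{i<..<m1}. \<gamma> (\<bar>fst \<omega> i k - fst \<omega> j k\<bar>^2))"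
          unfolding T2_def fk_def by (intro sum.cong refl) (simp add: z1)
        have e3: "T3 k ?z = (\<Sum>i<m2. \<Sum>j\<in>{i<..<m2}. \<gamma> (\<bar>snd \<omega> i k - snd \<omega> j k\<bar>^2))"
          unfolding T3_def fk_def by (intro sum.cong refl) (simp add: z2)
        have hat: "energy_hat_coord \<gamma> m1 m2 (fst \<omega>) (snd \<omega>) k
              = 2 * (T1 k ?z / (real m1 * real m2)) - T2 k ?z / real (m1 choose 2) - T3 k ?z / real (m2 choose 2)"
          unfolding energy_hat_coord_def e1 e2 e3 by simp
        have en: "energy_coord \<gamma> F' G' k = 2 * th1 k - th2 k - th3 k"
          unfolding energy_coord_def th1_def th2_def th3_def fk_def by simp
        show ?thesis unfolding hat en by (rule comb3[OF n1 n2 n3]) (simp add: s_def)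
      qed
      have allk: "\<bar>ordstat (energy_hat_coord \<gamma> m1 m2 (fst \<omega>) (snd \<omega>)) dd k - ordstat (energy_coord \<gamma> F' G') dd k\<bar> \<le> t"
        if "k \<in> {..<dd}" for k
        unfolding ordstat_def by (rule sort_nth_diff) (use each that in auto)
      have ne: "{..<dd} \<noteq> {}" using dd lessThan_empty_iff[of dd] by linarith
      have "(MAX k\<in>{..<dd}. \<bar>ordstat (energy_hat_coord \<gamma> m1 m2 (fst \<omega>) (snd \<omega>)) dd k
              - ordstat (energy_coord \<gamma> F' G') dd k\<bar>) \<le> t"
        using allk ne by (subst Max_le_iff) auto
      then show False using w by simp
    qed
  qed
  have QF: "finite_measure ?Q"
  proof -
    interpret PF': prob_space "PiM {..<m1} (\<lambda>_. F')" by (rule prob_space_PiM) (rule PF)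
    interpret PG': prob_space "PiM {..<m2} (\<lambda>_. G')" by (rule prob_space_PiM) (rule PG)
    interpret pair_prob_space "PiM {..<m1} (\<lambda>_. F')" "PiM {..<m2} (\<lambda>_. G')" by standard
    show ?thesis by (rule P.finite_measure_axioms)
  qed
  have "measure ?Q {\<omega> \<in> space ?Q.
          (MAX k\<in>{..<dd}.
             \<bar>ordstat (energy_hat_coord \<gamma> m1 m2 (fst \<omega>) (snd \<omega>)) dd k
              - ordstat (energy_coord \<gamma> F' G') dd k\<bar>) > t} \<le> measure ?Q (Phi -` U \<inter> space ?Q)"
    by (rule measure_le_subset[OF QF incl]) (use Phim Um in measurable)
  also have "\<dots> \<le> real dd * (3 * bnd)" using QU RU by simp
  also have "3 * bnd = 6 * real (m1 + m2) * exp (- q0 * t\<^sup>2 / (32 * B\<^sup>2))"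
    unfolding bnd_def s_def by (simp add: power2_eq_square field_simps)
  finally show ?thesis .
qed

lemma asym:
  fixes \<beta> g K c :: real
  assumes b: "0 \<le> \<beta>" "\<beta> < g" and c: "c > 0"
  shows "eventually (\<lambda>n::nat. K * real n powr \<beta> + ln (6 * real n) \<le> (c/2) * real n powr g) sequentially"
proof -
  define e where "e = g / 2"
  define e' where "e' = max \<beta> e"
  have e: "e > 0" using b by (simp add: e_def)
  have e'g: "e' < g" using b e by (simp add: e'_def e_def)
  define M where "M = \<bar>K\<bar> + 6 powr e / e + 1"
  have M: "M > 0" using e by (simp add: M_def add_nonneg_pos)
  have lim: "((\<lambda>n::nat. real n powr (e' - g)) \<longlongrightarrow> 0) sequentially"
    by (rule tendsto_neg_powr) (use e'g filterlim_real_sequentially in auto)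
  have ev: "eventually (\<lambda>n::nat. real n powr (e' - g) < c / (2 * M)) sequentially"
    by (rule order_tendstoD(2)[OF lim]) (use c M in simp)
  have ev1: "eventually (\<lambda>n::nat. n \<ge> 1) sequentially" by (rule eventually_ge_at_top)
  show ?thesis using ev ev1
  proof eventually_elim
    case (elim n)
    have n1: "1 \<le> real n" using elim(2) by simp
    have np: "real n > 0" using n1 by simp
    have "K * real n powr \<beta> \<le> \<bar>K\<bar> * real n powr e'"
    proof -
      have "K * real n powr \<beta> \<le> \<bar>K\<bar> * real n powr \<beta>" by (simp add: mult_right_mono)
      also have "\<dots> \<le> \<bar>K\<bar> * real n powr e'"
        by (intro mult_left_mono powr_mono) (use n1 in \<open>auto simp: e'_def\<close>)
      finally show ?thesis .
    qed
    moreover have "ln (6 * real n) \<le> 6 powr e / e * real n powr e'"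
    proof -
      have "ln (6 * real n) \<le> (6 * real n) powr e / e" by (rule ln_powr_bound) (use n1 e in auto)
      also have "\<dots> = 6 powr e / e * real n powr e" by (simp add: powr_mult)
      also have "\<dots> \<le> 6 powr e / e * real n powr e'"
        by (intro mult_left_mono powr_mono) (use n1 e in \<open>auto simp: e'_def\<close>)
      finally show ?thesis .
    qed
    ultimately have "K * real n powr \<beta> + ln (6 * real n) \<le> M * real n powr e'"
      unfolding M_def by (simp add: algebra_simps) (smt (verit) powr_ge_zero)
    also have "real n powr e' = real n powr (e' - g) * real n powr g"
      by (simp add: powr_add[symmetric])
    also have "M * (real n powr (e' - g) * real n powr g) \<le> M * (c / (2 * M) * real n powr g)"
      using elim(1) M by (intro mult_left_mono mult_right_mono) auto
    also have "\<dots> = (c/2) * real n powr g" using M by simp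
    finally show ?case .
  qed
qed

theorem corollary1:
  fixes \<gamma> :: "real \<Rightarrow> real"
    and d n1 n2 :: "nat \<Rightarrow> nat"
    and F G :: "nat \<Rightarrow> (nat \<Rightarrow> real) measure"
    and \<pi>1 \<beta> :: real
  assumes d_pos: "\<And>n. d n \<ge> 1"
    and log_d: "(\<lambda>n. ln (real (d n))) \<in> O(\<lambda>n. real n powr \<beta>)"
    and beta: "0 \<le> \<beta>" "\<beta> < 1"
    and sizes: "\<forall>\<^sub>F n in sequentially. n1 n + n2 n = n \<and> 2 \<le> n1 n \<and> 2 \<le> n2 n"
    and ratio: "(\<lambda>n. real (n1 n) / real n) \<longlonglongrightarrow> \<pi>1"
    and pi1: "0 < \<pi>1" "\<pi>1 < 1"
    and F_prob: "\<And>n. prob_space (F n)"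
    and F_sets: "\<And>n. sets (F n) = sets (PiM {..<d n} (\<lambda>_. lborel))"
    and F_ac: "\<And>n. absolutely_continuous (PiM {..<d n} (\<lambda>_. lborel)) (F n)"
    and G_prob: "\<And>n. prob_space (G n)"
    and G_sets: "\<And>n. sets (G n) = sets (PiM {..<d n} (\<lambda>_. lborel))"
    and G_ac: "\<And>n. absolutely_continuous (PiM {..<d n} (\<lambda>_. lborel)) (G n)"
    and gamma_cont: "continuous_on {0..} \<gamma>"
    and gamma_mono: "mono_on {0..} \<gamma>"
    and gamma_nonneg: "\<And>t. 0 \<le> t \<Longrightarrow> 0 \<le> \<gamma> t"
    and gamma0: "\<gamma> 0 = 0"
    and gamma_deriv: "\<exists>g. (\<forall>t>0. (\<gamma> has_real_derivative g t) (at t))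
                          \<and> completely_monotone_on_pos g
                          \<and> (\<exists>s>0. \<exists>t>0. g s \<noteq> g t)"
    and gamma_bounded: "bounded (\<gamma> ` {0..})"
  shows "\<exists>b1>0. \<forall>\<alpha>. 0 < \<alpha> \<and> \<alpha> < (1 - \<beta>) / 2 \<longrightarrow>
    (\<lambda>n. measure (PiM {..<n1 n} (\<lambda>_. F n) \<Otimes>\<^sub>M PiM {..<n2 n} (\<lambda>_. G n))
        {\<omega> \<in> space (PiM {..<n1 n} (\<lambda>_. F n) \<Otimes>\<^sub>M PiM {..<n2 n} (\<lambda>_. G n)).
          (MAX k\<in>{..<d n}.
             \<bar>ordstat (energy_hat_coord \<gamma> (n1 n) (n2 n) (fst \<omega>) (snd \<omega>)) (d n) k
              - ordstat (energy_coord \<gamma> (F n) (G n)) (d n) k\<bar>) > real n powr (- \<alpha>)})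
    \<in> O(\<lambda>n. exp (- b1 * (real n powr (1 - 2 * \<alpha>) - real n powr \<beta>)))"
proof -
  obtain Bg where Bg: "\<forall>x\<in>\<gamma> ` {0..}. norm x \<le> Bg" using gamma_bounded by (auto simp: bounded_iff)
  define B where "B = max 1 Bg"
  have Bpos: "B > 0" by (simp add: B_def)
  have gb: "0 \<le> \<gamma> u \<and> \<gamma> u \<le> B" if "0 \<le> u" for u
  proof -
    have "norm (\<gamma> u) \<le> Bg" using Bg that by auto
    then show ?thesis using gamma_nonneg[OF that] by (simp add: B_def)
  qed
  define p where "p = min \<pi>1 (1 - \<pi>1) / 2"
  have p: "p > 0" "p \<le> \<pi>1 / 2" "p \<le> (1 - \<pi>1) / 2" using pi1 by (auto simp: p_def)
  define c where "c = p / (32 * B\<^sup>2)"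
  have c: "c > 0" using p Bpos by (simp add: c_def)
  show ?thesis
  proof (intro exI[of _ "c/2"] conjI allI impI)
    show "c / 2 > 0" using c by simp
    fix \<alpha> :: real assume \<alpha>: "0 < \<alpha> \<and> \<alpha> < (1 - \<beta>) / 2"
    have gb2: "\<beta> < 1 - 2 * \<alpha>" using \<alpha> by simp
    obtain K where K: "K > 0" "eventually (\<lambda>n. norm (ln (real (d n))) \<le> K * norm (real n powr \<beta>)) at_top"
      using log_d by (elim landau_o.bigE) auto
    have E2: "eventually (\<lambda>n. real (n1 n) / real n > \<pi>1 / 2) sequentially"
      by (rule order_tendstoD(1)[OF ratio]) (use pi1 in simp)
    have E3: "eventually (\<lambda>n. real (n1 n) / real n < (1 + \<pi>1) / 2) sequentially"
      by (rule order_tendstoD(2)[OF ratio]) (use pi1 in simp)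
    have E4: "eventually (\<lambda>n. 4 / p \<le> real n) sequentially"
      using filterlim_real_sequentially unfolding filterlim_at_top by blast
    have E5: "eventually (\<lambda>n::nat. K * real n powr \<beta> + ln (6 * real n) \<le> (c/2) * real n powr (1 - 2 * \<alpha>)) sequentially"
      by (rule asym) (use beta gb2 c in auto)
    have E6: "eventually (\<lambda>n::nat. n \<ge> 1) sequentially" by (rule eventually_ge_at_top)
    show "(\<lambda>n. measure (PiM {..<n1 n} (\<lambda>_. F n) \<Otimes>\<^sub>M PiM {..<n2 n} (\<lambda>_. G n))
        {\<omega> \<in> space (PiM {..<n1 n} (\<lambda>_. F n) \<Otimes>\<^sub>M PiM {..<n2 n} (\<lambda>_. G n)).
          (MAX k\<in>{..<d n}.
             \<bar>ordstat (energy_hat_coord \<gamma> (n1 n) (n2 n) (fst \<omega>) (snd \<omega>)) (d n) k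
              - ordstat (energy_coord \<gamma> (F n) (G n)) (d n) k\<bar>) > real n powr (- \<alpha>)})
    \<in> O(\<lambda>n. exp (- (c/2) * (real n powr (1 - 2 * \<alpha>) - real n powr \<beta>)))"
    proof (rule bigoI[where c=1])
      show "eventually (\<lambda>n. norm (measure (PiM {..<n1 n} (\<lambda>_. F n) \<Otimes>\<^sub>M PiM {..<n2 n} (\<lambda>_. G n))
        {\<omega> \<in> space (PiM {..<n1 n} (\<lambda>_. F n) \<Otimes>\<^sub>M PiM {..<n2 n} (\<lambda>_. G n)).
          (MAX k\<in>{..<d n}.
             \<bar>ordstat (energy_hat_coord \<gamma> (n1 n) (n2 n) (fst \<omega>) (snd \<omega>)) (d n) k
              - ordstat (energy_coord \<gamma> (F n) (G n)) (d n) k\<bar>) > real n powr (- \<alpha>)})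
        \<le> 1 * norm (exp (- (c/2) * (real n powr (1 - 2 * \<alpha>) - real n powr \<beta>)))) sequentially"
        using sizes E2 E3 E4 E5 E6 K(2)
      proof eventually_elim
        case (elim n)
        let ?P = "measure (PiM {..<n1 n} (\<lambda>_. F n) \<Otimes>\<^sub>M PiM {..<n2 n} (\<lambda>_. G n))
        {\<omega> \<in> space (PiM {..<n1 n} (\<lambda>_. F n) \<Otimes>\<^sub>M PiM {..<n2 n} (\<lambda>_. G n)).
          (MAX k\<in>{..<d n}.
             \<bar>ordstat (energy_hat_coord \<gamma> (n1 n) (n2 n) (fst \<omega>) (snd \<omega>)) (d n) k
              - ordstat (energy_coord \<gamma> (F n) (G n)) (d n) k\<bar>) > real n powr (- \<alpha>)}"
        have nsum: "n1 n + n2 n = n" using elim(1) by simp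
        have n1: "1 \<le> real n" using elim(6) by simp
        have np: "0 < real n" using n1 by simp
        have r1: "real (n1 n) > \<pi>1 / 2 * real n" using elim(2) np by (simp add: field_simps)
        have r2: "real (n1 n) < (1 + \<pi>1) / 2 * real n" using elim(3) np by (simp add: field_simps)
        have r2': "real (n2 n) > (1 - \<pi>1) / 2 * real n"
        proof -
          have "real (n1 n) + real (n2 n) = real n" using nsum by (metis of_nat_add)
          moreover have "(1 - \<pi>1) / 2 * real n = real n - (1 + \<pi>1) / 2 * real n" by (simp add: field_simps)
          ultimately show ?thesis using r2 by linarith
        qed
        define q0 where "q0 = p * real n"
        have "p * real n \<le> \<pi>1 / 2 * real n" using p np by (intro mult_right_mono) auto
        then have q0a: "q0 \<le> real (n1 n)" using r1 unfolding q0_def by linarith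
        have "p * real n \<le> (1 - \<pi>1) / 2 * real n" using p np by (intro mult_right_mono) auto
        then have q0b: "q0 \<le> real (n2 n)" using r2' unfolding q0_def by linarith
        have q04: "4 \<le> q0" using elim(4) p unfolding q0_def by (simp add: field_simps)
        have m4: "4 \<le> n1 n" "4 \<le> n2 n" using q0a q0b q04 by linarith+
        define t where "t = real n powr (- \<alpha>)"
        have t: "t > 0" using np by (simp add: t_def)
        have dd: "1 \<le> d n" by (rule d_pos)
        have fx: "?P \<le> real (d n) * (6 * real (n1 n + n2 n) * exp (- q0 * t\<^sup>2 / (32 * B\<^sup>2)))"
          unfolding t_def
          by (rule fixed_n[OF F_prob G_prob F_sets G_sets gamma_cont gb Bpos m4 _ q0a q0b _ dd])
             (use q04 np in auto)
        have ex: "q0 * t\<^sup>2 / (32 * B\<^sup>2) = c * real n powr (1 - 2 * \<alpha>)"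
        proof -
          have "t\<^sup>2 = real n powr (- 2 * \<alpha>)" unfolding t_def power2_eq_square
            by (simp add: powr_add[symmetric])
          moreover have "real n powr (1 - 2 * \<alpha>) = real n powr 1 * real n powr (- (2 * \<alpha>))"
            using powr_add[of "real n" 1 "- (2 * \<alpha>)"] by simp
          ultimately have "real n * t\<^sup>2 = real n powr (1 - 2 * \<alpha>)" using np by simp
          then show ?thesis unfolding q0_def c_def by (simp add: field_simps)
        qed
        let ?N = "real n powr (1 - 2 * \<alpha>)"
        have lnd: "ln (real (d n)) \<le> K * real n powr \<beta>" using elim(7) by simp
        have "?P \<le> real (d n) * (6 * real n * exp (- c * ?N))"
          using fx ex nsum by simp
        also have "\<dots> = exp (ln (real (d n)) + ln (6 * real n) - c * ?N)"
          using dd np by (simp add: exp_add exp_diff exp_minus field_simps)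
        also have "\<dots> \<le> exp (- (c/2) * (?N - real n powr \<beta>))"
        proof -
          have "0 \<le> (c/2) * real n powr \<beta>" using c by simp
          then show ?thesis using lnd elim(5) by (simp add: algebra_simps)
        qed
        finally have "?P \<le> exp (- (c/2) * (?N - real n powr \<beta>))" .
        then show ?case by simp
      qed
    qed
  qed
qed

end
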